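(* $$\mathrm{toi}(K_t \square K_s) = \begin{cases} t+s-1 &\text{ if } t, s\geq 2 \text{ and } \max\{s,t\} \geq 4\\ 4 &\text{ if } s=t=3\\ 3 &\text{ if } s=3 \text{ and } t=2 \end{cases}$$
   Context: $\mathrm{toi}(G)$ is the maximum $t$ such that $G$ contains a totally odd strong immersion of $K_t$ (an injective map of $V(K_t)$ into $V(G)$ with pairwise edge-disjoint odd paths joining each pair of terminals, no terminal being an interior vertex of any path). $G\square H$ is the Cartesian product: vertex set $V(G)\times V(H)$, with $(g_1,h_1)\sim(g_2,h_2)$ iff ($g_1=g_2$ and $h_1h_2\in E(H)$) or ($h_1=h_2$ and $g_1g_2\in E(G)$). *)

theory Defs
  imports Main
begin

text \<open>A finite simple graph is represented as a pair (V, E) of a vertex set and a set of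
  edges, each edge being a 2-element subset of V.\<close>

type_synonym 'a graph = "'a set \<times> 'a set set"

definition verts :: "'a graph \<Rightarrow> 'a set" where "verts G = fst G"
definition edges :: "'a graph \<Rightarrow> 'a set set" where "edges G = snd G"

definition complete_graph :: "nat \<Rightarrow> nat graph" where
  "complete_graph t = ({..<t}, {{i, j} | i j. i < t \<and> j < t \<and> i \<noteq> j})"

definition cart_prod :: "'a graph \<Rightarrow> 'b graph \<Rightarrow> ('a \<times> 'b) graph" where
  "cart_prod G H =
     (verts G \<times> verts H,
      {{(g1, h1), (g2, h2)} | g1 h1 g2 h2.
         g1 \<in> verts G \<and> g2 \<in> verts G \<and> h1 \<in> verts H \<and> h2 \<in> verts H \<and>
         ((g1 = g2 \<and> {h1, h2} \<in> edges H) \<or> (h1 = h2 \<and> {g1, g2} \<in> edges G))})"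

definition is_path :: "'a graph \<Rightarrow> 'a list \<Rightarrow> 'a \<Rightarrow> 'a \<Rightarrow> bool" where
  "is_path G p u v \<longleftrightarrow> p \<noteq> [] \<and> hd p = u \<and> last p = v \<and> distinct p \<and> set p \<subseteq> verts G \<and>
     (\<forall>i < length p - 1. {p ! i, p ! Suc i} \<in> edges G)"

definition path_edges :: "'a list \<Rightarrow> 'a set set" where
  "path_edges p = {{p ! i, p ! Suc i} | i. i < length p - 1}"

definition path_interior :: "'a list \<Rightarrow> 'a set" where
  "path_interior p = set (butlast (tl p))"

definition totally_odd_strong_immersion ::
    "'a graph \<Rightarrow> nat \<Rightarrow> (nat \<Rightarrow> 'a) \<Rightarrow> (nat \<Rightarrow> nat \<Rightarrow> 'a list) \<Rightarrow> bool" where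
  "totally_odd_strong_immersion G k \<pi> P \<longleftrightarrow>
     inj_on \<pi> {..<k} \<and> \<pi> ` {..<k} \<subseteq> verts G \<and>
     (\<forall>i j. i < j \<and> j < k \<longrightarrow>
        is_path G (P i j) (\<pi> i) (\<pi> j) \<and> odd (length (P i j) - 1) \<and>
        (\<forall>l < k. \<pi> l \<notin> path_interior (P i j))) \<and>
     (\<forall>i j i' j'. i < j \<and> j < k \<and> i' < j' \<and> j' < k \<and> (i, j) \<noteq> (i', j') \<longrightarrow>
        path_edges (P i j) \<inter> path_edges (P i' j') = {})"

definition has_toi :: "'a graph \<Rightarrow> nat \<Rightarrow> bool" where
  "has_toi G k \<longleftrightarrow> (\<exists>\<pi> P. totally_odd_strong_immersion G k \<pi> P)"

definition toi :: "'a graph \<Rightarrow> nat" where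
  "toi G = (GREATEST k. has_toi G k)"

end

theory Submission
  imports Defs
begin


lemma interior_nth: "x \<in> path_interior p \<longleftrightarrow> (\<exists>i. 0 < i \<and> i < length p - 1 \<and> x = p ! i)"
proof -
  have "x \<in> path_interior p \<longleftrightarrow> (\<exists>i<length p - 2. p ! Suc i = x)"
    unfolding path_interior_def in_set_conv_nth
  proof (intro iffI; elim exE conjE)
    fix i assume "i < length (butlast (tl p))" "butlast (tl p) ! i = x"
    then show "\<exists>i<length p - 2. p ! Suc i = x"
      by (intro exI[of _ i]) (simp add: nth_butlast nth_tl)
  next
    fix i assume "i < length p - 2" "p ! Suc i = x"
    then show "\<exists>i<length (butlast (tl p)). butlast (tl p) ! i = x"
      by (intro exI[of _ i]) (simp add: nth_butlast nth_tl)
  qed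
  also have "\<dots> \<longleftrightarrow> (\<exists>i. 0 < i \<and> i < length p - 1 \<and> x = p ! i)"
  proof
    assume "\<exists>i<length p - 2. p ! Suc i = x" then show "\<exists>i. 0 < i \<and> i < length p - 1 \<and> x = p ! i"
      by (elim exE conjE, intro exI[of _ "Suc _"]) auto
  next
    assume "\<exists>i. 0 < i \<and> i < length p - 1 \<and> x = p ! i"
    then obtain i where "0 < i" "i < length p - 1" "x = p ! i" by blast
    then show "\<exists>i<length p - 2. p ! Suc i = x"
      by (intro exI[of _ "i - 1"]) auto
  qed
  finally show ?thesis .
qed

lemma path_edges_rev_sub: "path_edges (rev p) \<subseteq> path_edges p"
proof
  fix x assume "x \<in> path_edges (rev p)"
  then obtain i where i: "i < length p - 1" "x = {rev p ! i, rev p ! Suc i}"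
    by (auto simp: path_edges_def)
  define m where "m = length p - 2 - i"
  have "m < length p - 1" "x = {p ! m, p ! Suc m}"
    using i by (auto simp: m_def rev_nth Suc_diff_Suc numeral_2_eq_2)
  then show "x \<in> path_edges p" by (auto simp: path_edges_def)
qed

lemma path_edges_rev: "path_edges (rev p) = path_edges p"
  using path_edges_rev_sub[of p] path_edges_rev_sub[of "rev p"] by auto

lemma interior_rev: "path_interior (rev p) = path_interior p"
proof -
  have "path_interior (rev p) \<subseteq> path_interior p" for p :: "'a list"
  proof
    fix x assume "x \<in> path_interior (rev p)"
    then obtain i where i: "0 < i" "i < length p - 1" "x = rev p ! i" by (auto simp: interior_nth)
    show "x \<in> path_interior p" unfolding interior_nth
      using i by (intro exI[of _ "length p - 1 - i"]) (auto simp: rev_nth)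
  qed
  from this[of p] this[of "rev p"] show ?thesis by auto
qed

lemma is_path_rev: "is_path G p u v \<Longrightarrow> is_path G (rev p) v u"
  unfolding is_path_def
proof (intro conjI allI impI; (elim conjE)?)
  fix i assume a: "p \<noteq> []" "hd p = u" "last p = v" "distinct p" "set p \<subseteq> verts G"
    "\<forall>i<length p - 1. {p ! i, p ! Suc i} \<in> edges G" "i < length (rev p) - 1"
  define m where "m = length p - 2 - i"
  have "m < length p - 1" "{rev p ! i, rev p ! Suc i} = {p ! m, p ! Suc m}"
    using a(7) by (auto simp: m_def rev_nth Suc_diff_Suc numeral_2_eq_2)
  then show "{rev p ! i, rev p ! Suc i} \<in> edges G" using a(6) by auto
qed (auto simp: hd_rev last_rev)


definition pth :: "(nat \<Rightarrow> nat \<Rightarrow> 'a list) \<Rightarrow> nat \<Rightarrow> nat \<Rightarrow> 'a list" where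
  "pth P i j = (if i < j then P i j else rev (P j i))"

lemma pth_swap: "i \<noteq> j \<Longrightarrow> pth P j i = rev (pth P i j)"
  by (auto simp: pth_def)

locale imm =
  fixes G :: "'a graph" and k :: nat and \<pi> :: "nat \<Rightarrow> 'a" and P :: "nat \<Rightarrow> nat \<Rightarrow> 'a list"
  assumes imm: "totally_odd_strong_immersion G k \<pi> P"
begin

lemma inj: "inj_on \<pi> {..<k}" and pi_V: "i < k \<Longrightarrow> \<pi> i \<in> verts G"
  using imm by (auto simp: totally_odd_strong_immersion_def)

lemma pth_props:
  assumes "i < k" "j < k" "i \<noteq> j"
  shows "is_path G (pth P i j) (\<pi> i) (\<pi> j)" "odd (length (pth P i j) - 1)"
    "\<And>l. l < k \<Longrightarrow> \<pi> l \<notin> path_interior (pth P i j)"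
proof -
  have A: "is_path G (P a b) (\<pi> a) (\<pi> b) \<and> odd (length (P a b) - 1) \<and> (\<forall>l<k. \<pi> l \<notin> path_interior (P a b))"
    if "a < b" "b < k" for a b
    using imm that by (auto simp: totally_odd_strong_immersion_def)
  show "is_path G (pth P i j) (\<pi> i) (\<pi> j)"
    using A[of i j] A[of j i] assms by (auto simp: pth_def intro: is_path_rev)
  show "odd (length (pth P i j) - 1)"
    using A[of i j] A[of j i] assms by (auto simp: pth_def)
  show "\<And>l. l < k \<Longrightarrow> \<pi> l \<notin> path_interior (pth P i j)"
    using A[of i j] A[of j i] assms by (auto simp: pth_def interior_rev)
qed

lemma pth_edges_eq: "pth P i j = P (min i j) (max i j) \<or> pth P i j = rev (P (min i j) (max i j))"
  by (auto simp: pth_def min_def max_def)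

lemma pth_edges: "path_edges (pth P i j) = path_edges (P (min i j) (max i j))"
  by (cases "i < j") (auto simp: pth_def path_edges_rev min_def max_def)

lemma pth_disj:
  assumes "i < k" "j < k" "i \<noteq> j" "i' < k" "j' < k" "i' \<noteq> j'" "{i,j} \<noteq> {i',j'}"
  shows "path_edges (pth P i j) \<inter> path_edges (pth P i' j') = {}"
proof -
  have ne: "(min i j, max i j) \<noteq> (min i' j', max i' j')"
    using assms(7) by (auto simp: min_def max_def doubleton_eq_iff split: if_splits)
  have "min i j < max i j" "max i j < k" "min i' j' < max i' j'" "max i' j' < k"
    using assms by auto
  moreover have "\<forall>i j i' j'. i < j \<and> j < k \<and> i' < j' \<and> j' < k \<and> (i, j) \<noteq> (i', j') \<longrightarrow>
        path_edges (P i j) \<inter> path_edges (P i' j') = {}"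
    using imm unfolding totally_odd_strong_immersion_def by blast
  ultimately show ?thesis unfolding pth_edges using ne by blast
qed

lemma pth_len:
  assumes "i < k" "j < k" "i \<noteq> j"
  shows "2 \<le> length (pth P i j)" "even (length (pth P i j))"
proof -
  have "odd (n - 1) \<Longrightarrow> 2 \<le> n \<and> even n" for n :: nat by (cases n) (auto dest!: odd_pos)
  then show "2 \<le> length (pth P i j)" "even (length (pth P i j))" using pth_props(2)[OF assms] by auto
qed

lemma pth_basic:
  assumes "i < k" "j < k" "i \<noteq> j"
  shows "pth P i j ! 0 = \<pi> i" "pth P i j ! (length (pth P i j) - 1) = \<pi> j"
    "distinct (pth P i j)" "set (pth P i j) \<subseteq> verts G"
    "\<And>m. m < length (pth P i j) - 1 \<Longrightarrow> {pth P i j ! m, pth P i j ! Suc m} \<in> edges G"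
    "\<And>m. m < length (pth P i j) - 1 \<Longrightarrow> {pth P i j ! m, pth P i j ! Suc m} \<in> path_edges (pth P i j)"
proof -
  note p = pth_props(1)[OF assms, unfolded is_path_def]
  show "pth P i j ! 0 = \<pi> i" using p by (metis hd_conv_nth)
  show "pth P i j ! (length (pth P i j) - 1) = \<pi> j" using p by (metis last_conv_nth)
  show "distinct (pth P i j)" "set (pth P i j) \<subseteq> verts G" using p by simp_all
  show "\<And>m. m < length (pth P i j) - 1 \<Longrightarrow> {pth P i j ! m, pth P i j ! Suc m} \<in> edges G"
    using p by blast
  show "\<And>m. m < length (pth P i j) - 1 \<Longrightarrow> {pth P i j ! m, pth P i j ! Suc m} \<in> path_edges (pth P i j)"
    unfolding path_edges_def by blast
qed

lemma interior_notin:
  assumes "i < k" "j < k" "i \<noteq> j" "0 < m" "m < length (pth P i j) - 1" "l < k"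
  shows "pth P i j ! m \<noteq> \<pi> l"
  using pth_props(3)[OF assms(1-3) assms(6)] assms(4,5) unfolding interior_nth by metis

end


definition nbrs :: "'a graph \<Rightarrow> 'a \<Rightarrow> 'a set" where "nbrs G x = {v. {x,v} \<in> edges G}"

context imm begin

lemma nb_edge:
  assumes "i < k" "j < k" "i \<noteq> j"
  shows "{\<pi> i, pth P i j ! 1} \<in> edges G" "{\<pi> i, pth P i j ! 1} \<in> path_edges (pth P i j)"
proof -
  have "0 < length (pth P i j) - 1" using pth_len[OF assms] by simp
  then show "{\<pi> i, pth P i j ! 1} \<in> edges G" "{\<pi> i, pth P i j ! 1} \<in> path_edges (pth P i j)"
    using pth_basic[OF assms] by (metis One_nat_def)+
qed

lemma nb_inj: assumes "i < k" shows "inj_on (\<lambda>j. pth P i j ! 1) ({..<k} - {i})"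
proof (rule inj_onI)
  fix j j' assume j: "j \<in> {..<k} - {i}" and j': "j' \<in> {..<k} - {i}" and eq: "pth P i j ! 1 = pth P i j' ! 1"
  show "j = j'"
  proof (rule ccontr)
    assume ne: "j \<noteq> j'"
    have "{i,j} \<noteq> {i,j'}" using ne j j' by (auto simp: doubleton_eq_iff)
    then have "path_edges (pth P i j) \<inter> path_edges (pth P i j') = {}"
      using pth_disj[of i j i j'] j j' assms by auto
    moreover have "{\<pi> i, pth P i j ! 1} \<in> path_edges (pth P i j)"
      "{\<pi> i, pth P i j' ! 1} \<in> path_edges (pth P i j')"
      using nb_edge(2) j j' assms by auto
    ultimately show False using eq by auto
  qed
qed

lemma nb_img: assumes "i < k" shows "(\<lambda>j. pth P i j ! 1) ` ({..<k} - {i}) \<subseteq> nbrs G (\<pi> i)"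
  using nb_edge(1) assms by (auto simp: nbrs_def)

lemma deg_bound:
  assumes "i < k" "finite (nbrs G (\<pi> i))"
  shows "k - 1 \<le> card (nbrs G (\<pi> i))"
proof -
  have "card ((\<lambda>j. pth P i j ! 1) ` ({..<k} - {i})) = k - 1"
    using card_image[OF nb_inj[OF assms(1)]] assms(1) by simp
  then show ?thesis using card_mono[OF assms(2) nb_img[OF assms(1)]] by simp
qed

lemma nb_surj:
  assumes "i < k" "finite (nbrs G (\<pi> i))" "card (nbrs G (\<pi> i)) \<le> k - 1" "v \<in> nbrs G (\<pi> i)"
  shows "\<exists>j<k. j \<noteq> i \<and> pth P i j ! 1 = v"
proof -
  have c: "card ((\<lambda>j. pth P i j ! 1) ` ({..<k} - {i})) = k - 1"
    using card_image[OF nb_inj[OF assms(1)]] assms(1) by simp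
  have "(\<lambda>j. pth P i j ! 1) ` ({..<k} - {i}) = nbrs G (\<pi> i)"
    using card_subset_eq[OF assms(2) nb_img[OF assms(1)]] c assms(3) card_mono[OF assms(2) nb_img[OF assms(1)]]
    by simp
  then show ?thesis using assms(4) by force
qed

lemma zmap:
  assumes reg: "\<forall>i<k. finite (nbrs G (\<pi> i)) \<and> card (nbrs G (\<pi> i)) \<le> k - 1"
    and w: "w \<in> verts G" "w \<notin> \<pi> ` {..<k}"
  shows "\<exists>z. inj_on z {u\<in>{..<k}. {\<pi> u, w} \<in> edges G}
     \<and> z ` {u\<in>{..<k}. {\<pi> u, w} \<in> edges G} \<subseteq> {v \<in> nbrs G w. v \<notin> \<pi> ` {..<k}}
     \<and> (\<forall>u\<in>{u\<in>{..<k}. {\<pi> u, w} \<in> edges G}. \<exists>j<k. j \<noteq> u \<and> pth P u j ! 1 = w \<and> pth P u j ! 2 = z u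
            \<and> 3 \<le> length (pth P u j) - 1)"
proof -
  define TI where "TI = {u\<in>{..<k}. {\<pi> u, w} \<in> edges G}"
  define J where "J u = (SOME j. j<k \<and> j \<noteq> u \<and> pth P u j ! 1 = w)" for u
  define z where "z u = pth P u (J u) ! 2" for u
  have J: "J u < k \<and> J u \<noteq> u \<and> pth P u (J u) ! 1 = w" if "u \<in> TI" for u
  proof -
    have "w \<in> nbrs G (\<pi> u)" using that by (auto simp: TI_def nbrs_def)
    then have "\<exists>j<k. j \<noteq> u \<and> pth P u j ! 1 = w" using nb_surj[of u w] reg that by (auto simp: TI_def)
    then have "\<exists>j. j<k \<and> j \<noteq> u \<and> pth P u j ! 1 = w" by blast
    then show ?thesis unfolding J_def by (rule someI_ex)
  qed
  have L: "3 \<le> length (pth P u (J u)) - 1" if "u \<in> TI" for u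
  proof -
    have u: "u < k" using that by (auto simp: TI_def)
    note Ju = J[OF that]
    note ln = pth_len[of u "J u"]
    have "length (pth P u (J u)) \<noteq> 2"
    proof
      assume "length (pth P u (J u)) = 2"
      then have "pth P u (J u) ! 1 = \<pi> (J u)" using pth_basic(2)[of u "J u"] u Ju by simp
      then have "w = \<pi> (J u)" using Ju by simp
      then show False using Ju w(2) by blast
    qed
    then show ?thesis using ln u Ju by (auto elim!: evenE)
  qed
  have zN: "z u \<in> nbrs G w \<and> z u \<notin> \<pi> ` {..<k}" if "u \<in> TI" for u
  proof -
    have u: "u < k" using that by (auto simp: TI_def)
    note Ju = J[OF that]
    have "{pth P u (J u) ! 1, pth P u (J u) ! Suc 1} \<in> edges G"
      using pth_basic(5)[of u "J u" 1] L[OF that] u Ju by auto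
    then have "z u \<in> nbrs G w" using Ju by (simp add: z_def nbrs_def numeral_2_eq_2)
    moreover have "z u \<notin> \<pi> ` {..<k}"
      using interior_notin[of u "J u" 2] L[OF that] u Ju by (auto simp: z_def)
    ultimately show ?thesis by blast
  qed
  have zinj: "inj_on z TI"
  proof (rule inj_onI, rule ccontr)
    fix u u' assume uu: "u \<in> TI" "u' \<in> TI" "z u = z u'" "u \<noteq> u'"
    have u: "u < k" "u' < k" using uu by (auto simp: TI_def)
    note Ju = J[OF uu(1)] and Ju' = J[OF uu(2)]
    have e1: "{w, z u} \<in> path_edges (pth P u (J u))"
      using pth_basic(6)[of u "J u" 1] L[OF uu(1)] u Ju by (auto simp: z_def numeral_2_eq_2)
    have e2: "{w, z u'} \<in> path_edges (pth P u' (J u'))"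
      using pth_basic(6)[of u' "J u'" 1] L[OF uu(2)] u Ju' by (auto simp: z_def numeral_2_eq_2)
    have "{u, J u} = {u', J u'}"
      using pth_disj[of u "J u" u' "J u'"] e1 e2 uu(3) u Ju Ju' by auto
    then have eqs: "u' = J u" "J u' = u" using uu(4) by (auto simp: doubleton_eq_iff)
    define p where "p = pth P u (J u)"
    have rp: "pth P u' (J u') = rev p" using pth_swap[of u "J u" P] Ju unfolding p_def eqs(2) by (simp add: eqs(1))
    have Lp: "3 \<le> length p - 1" using L[OF uu(1)] by (simp add: p_def)
    have "rev p ! 1 = w" using Ju' rp by simp
    then have "p ! (length p - 2) = w" using Lp by (simp add: rev_nth numeral_2_eq_2)
    moreover have "p ! 1 = w" using Ju by (simp add: p_def)
    moreover have "distinct p" using pth_basic(3)[of u "J u"] u Ju by (simp add: p_def)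
    ultimately have "length p - 2 = 1" using Lp nth_eq_iff_index_eq[of p "length p - 2" 1] by auto
    moreover have "even (length p)" using pth_len(2)[of u "J u"] u Ju by (simp add: p_def)
    ultimately show False using Lp by presburger
  qed
  have "inj_on z TI \<and> z ` TI \<subseteq> {v \<in> nbrs G w. v \<notin> \<pi> ` {..<k}}
     \<and> (\<forall>u\<in>TI. \<exists>j<k. j \<noteq> u \<and> pth P u j ! 1 = w \<and> pth P u j ! 2 = z u
            \<and> 3 \<le> length (pth P u j) - 1)"
  proof (intro conjI ballI)
    show "inj_on z TI" by (rule zinj)
    show "z ` TI \<subseteq> {v \<in> nbrs G w. v \<notin> \<pi> ` {..<k}}"
      by (rule image_subsetI) (use zN in simp)
    fix u assume u: "u \<in> TI"
    show "\<exists>j<k. j \<noteq> u \<and> pth P u j ! 1 = w \<and> pth P u j ! 2 = z u \<and> 3 \<le> length (pth P u j) - 1"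
      by (rule exI[of _ "J u"]) (use J[OF u] L[OF u] in \<open>simp add: z_def\<close>)
  qed
  then show ?thesis unfolding TI_def by blast
qed

end


context imm begin

lemma zcard:
  assumes reg: "\<forall>i<k. finite (nbrs G (\<pi> i)) \<and> card (nbrs G (\<pi> i)) \<le> k - 1"
    and w: "w \<in> verts G" "w \<notin> \<pi> ` {..<k}" and fin: "finite (nbrs G w)"
  shows "card {u\<in>{..<k}. {\<pi> u, w} \<in> edges G} \<le> card {v \<in> nbrs G w. v \<notin> \<pi> ` {..<k}}"
proof -
  from zmap[OF reg w] obtain z where z: "inj_on z {u\<in>{..<k}. {\<pi> u, w} \<in> edges G}"
     "z ` {u\<in>{..<k}. {\<pi> u, w} \<in> edges G} \<subseteq> {v \<in> nbrs G w. v \<notin> \<pi> ` {..<k}}"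
    by (elim exE conjE)
  show ?thesis using card_inj_on_le[OF z(1) z(2)] fin by simp
qed

lemma zsurj:
  assumes reg: "\<forall>i<k. finite (nbrs G (\<pi> i)) \<and> card (nbrs G (\<pi> i)) \<le> k - 1"
    and w: "w \<in> verts G" "w \<notin> \<pi> ` {..<k}" and fin: "finite (nbrs G w)"
    and le: "card {v \<in> nbrs G w. v \<notin> \<pi> ` {..<k}} \<le> card {u\<in>{..<k}. {\<pi> u, w} \<in> edges G}"
    and v: "v \<in> nbrs G w" "v \<notin> \<pi> ` {..<k}"
  shows "\<exists>u<k. \<exists>j<k. u \<noteq> j \<and> pth P u j ! 1 = w \<and> pth P u j ! 2 = v \<and> 3 \<le> length (pth P u j) - 1"
proof -
  from zmap[OF reg w] obtain z where z: "inj_on z {u\<in>{..<k}. {\<pi> u, w} \<in> edges G}"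
     "z ` {u\<in>{..<k}. {\<pi> u, w} \<in> edges G} \<subseteq> {v \<in> nbrs G w. v \<notin> \<pi> ` {..<k}}"
     "\<forall>u\<in>{u\<in>{..<k}. {\<pi> u, w} \<in> edges G}. \<exists>j<k. j \<noteq> u \<and> pth P u j ! 1 = w \<and> pth P u j ! 2 = z u
            \<and> 3 \<le> length (pth P u j) - 1"
    by (elim exE conjE)
  have fN: "finite {v \<in> nbrs G w. v \<notin> \<pi> ` {..<k}}" using fin by simp
  have "card (z ` {u\<in>{..<k}. {\<pi> u, w} \<in> edges G}) = card {u\<in>{..<k}. {\<pi> u, w} \<in> edges G}"
    using card_image[OF z(1)] .
  then have "z ` {u\<in>{..<k}. {\<pi> u, w} \<in> edges G} = {v \<in> nbrs G w. v \<notin> \<pi> ` {..<k}}"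
    using card_subset_eq[OF fN z(2)] le card_mono[OF fN z(2)] by simp
  moreover have "v \<in> {v \<in> nbrs G w. v \<notin> \<pi> ` {..<k}}" using v by simp
  ultimately have "v \<in> z ` {u\<in>{..<k}. {\<pi> u, w} \<in> edges G}" by simp
  then obtain u where u: "u \<in> {u\<in>{..<k}. {\<pi> u, w} \<in> edges G}" "z u = v" by (elim imageE) simp
  from z(3) u(1) obtain j where j: "j<k" "j \<noteq> u" "pth P u j ! 1 = w" "pth P u j ! 2 = z u"
      "3 \<le> length (pth P u j) - 1" by (elim ballE exE conjE) auto
  have "u < k" using u(1) by simp
  then show ?thesis using j u(2) by blast
qed

lemma short_paths:
  assumes reg: "\<forall>i<k. finite (nbrs G (\<pi> i)) \<and> card (nbrs G (\<pi> i)) \<le> k - 1"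
    and tight: "\<And>w. w \<in> verts G \<Longrightarrow> w \<notin> \<pi> ` {..<k} \<Longrightarrow> finite (nbrs G w) \<and>
       card {v \<in> nbrs G w. v \<notin> \<pi> ` {..<k}} \<le> card {u\<in>{..<k}. {\<pi> u, w} \<in> edges G}"
    and ij: "i < k" "j < k" "i \<noteq> j" "{\<pi> i, \<pi> j} \<notin> edges G"
  shows "length (pth P i j) = 4"
proof -
  define p where "p = pth P i j"
  define L where "L = length p"
  have L2: "2 \<le> L" "even L" using pth_len[OF ij(1-3)] by (auto simp: p_def L_def)
  have "L \<noteq> 2"
  proof
    assume "L = 2"
    then have "{p ! 0, p ! Suc 0} \<in> edges G" using pth_basic(5)[OF ij(1-3), of 0] by (simp add: p_def L_def)
    moreover have "p ! 0 = \<pi> i" "p ! Suc 0 = \<pi> j" using pth_basic(1,2)[OF ij(1-3)] \<open>L = 2\<close> by (auto simp: p_def L_def)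
    ultimately show False using ij(4) by simp
  qed
  moreover have "\<not> 6 \<le> L"
  proof
    assume L6: "6 \<le> L"
    define w where "w = p ! 2"
    define w1 where "w1 = p ! 1"
    have wV: "w \<in> verts G" using pth_basic(4)[OF ij(1-3)] L6 by (auto simp: w_def p_def L_def)
    have "\<forall>l<k. p ! 2 \<noteq> \<pi> l" using interior_notin[OF ij(1-3), of 2] L6 by (simp add: p_def L_def)
    then have wT: "w \<notin> \<pi> ` {..<k}" by (auto simp: w_def)
    have "\<forall>l<k. p ! 1 \<noteq> \<pi> l" using interior_notin[OF ij(1-3), of 1] L6 by (simp add: p_def L_def)
    then have w1T: "w1 \<notin> \<pi> ` {..<k}" by (auto simp: w1_def)
    have e: "{w1, w} \<in> edges G" "{w1, w} \<in> path_edges p"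
      using pth_basic(5,6)[OF ij(1-3), of 1] L6 by (auto simp: w_def w1_def p_def L_def numeral_2_eq_2)
    have w1N: "w1 \<in> nbrs G w" using e(1) by (simp add: nbrs_def insert_commute)
    obtain u j' where uj: "u < k" "j' < k" "u \<noteq> j'" "pth P u j' ! 1 = w" "pth P u j' ! 2 = w1"
      "3 \<le> length (pth P u j') - 1"
      using zsurj[OF reg wV wT conjunct1[OF tight[OF wV wT]] conjunct2[OF tight[OF wV wT]] w1N w1T] by blast
    have e2: "{w1, w} \<in> path_edges (pth P u j')"
      using pth_basic(6)[OF uj(1-3), of 1] uj by (auto simp: numeral_2_eq_2 insert_commute)
    have "{u, j'} = {i, j}"
    proof (rule ccontr)
      assume "{u, j'} \<noteq> {i, j}"
      then have "path_edges (pth P u j') \<inter> path_edges p = {}" using pth_disj[OF uj(1-3) ij(1-3)] by (simp add: p_def)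
      then show False using e(2) e2 by blast
    qed
    then have "(u = i \<and> j' = j) \<or> (u = j \<and> j' = i)" by (auto simp: doubleton_eq_iff)
    moreover have dp: "distinct p" using pth_basic(3)[OF ij(1-3)] by (simp add: p_def)
    moreover have "\<not> (u = i \<and> j' = j)"
    proof
      assume "u = i \<and> j' = j"
      then have "p ! 1 = p ! 2" using uj(4) by (simp add: p_def w_def)
      then show False using dp L6 nth_eq_iff_index_eq[of p 1 2] by (simp add: L_def)
    qed
    moreover have "\<not> (u = j \<and> j' = i)"
    proof
      assume "u = j \<and> j' = i"
      then have "rev p ! 1 = w" using uj(4) pth_swap[OF ij(3), of P] by (simp add: p_def)
      then have "p ! (L - 2) = p ! 2" using L6 by (simp add: rev_nth L_def w_def numeral_2_eq_2)
      moreover have "L - 2 < length p" "2 < length p" using L6 by (auto simp: L_def)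
      ultimately have "L - 2 = 2" using dp nth_eq_iff_index_eq[of p "L - 2" 2] by blast
      then show False using L6 by simp
    qed
    ultimately show False by blast
  qed
  ultimately have "L = 4" using L2 by presburger
  then show ?thesis by (simp add: p_def L_def)
qed

end


definition radj :: "nat \<times> nat \<Rightarrow> nat \<times> nat \<Rightarrow> bool" where
  "radj u v \<longleftrightarrow> (fst u = fst v \<and> snd u \<noteq> snd v) \<or> (snd u = snd v \<and> fst u \<noteq> fst v)"

abbreviation KK :: "nat \<Rightarrow> nat \<Rightarrow> (nat \<times> nat) graph" where
  "KK t s \<equiv> cart_prod (complete_graph t) (complete_graph s)"

lemma verts_KK: "verts (KK t s) = {..<t} \<times> {..<s}"
  by (simp add: cart_prod_def verts_def complete_graph_def)

lemma edge_KK: "{u,v} \<in> edges (KK t s) \<longleftrightarrow> u \<in> {..<t} \<times> {..<s} \<and> v \<in> {..<t} \<times> {..<s} \<and> radj u v"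
proof
  assume "{u,v} \<in> edges (KK t s)"
  then obtain g1 h1 g2 h2 where e: "{u,v} = {(g1,h1),(g2,h2)}" and
    c: "g1 < t" "g2 < t" "h1 < s" "h2 < s"
    "(g1 = g2 \<and> h1 \<noteq> h2) \<or> (h1 = h2 \<and> g1 \<noteq> g2)"
    by (auto simp: cart_prod_def edges_def verts_def complete_graph_def doubleton_eq_iff)
  from e have "(u = (g1,h1) \<and> v = (g2,h2)) \<or> (u = (g2,h2) \<and> v = (g1,h1))"
    by (auto simp: doubleton_eq_iff)
  then show "u \<in> {..<t} \<times> {..<s} \<and> v \<in> {..<t} \<times> {..<s} \<and> radj u v"
    using c by (auto simp: radj_def)
next
  assume a: "u \<in> {..<t} \<times> {..<s} \<and> v \<in> {..<t} \<times> {..<s} \<and> radj u v"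
  obtain g1 h1 g2 h2 where u: "u = (g1,h1)" and v: "v = (g2,h2)" by (cases u, cases v) auto
  show "{u,v} \<in> edges (KK t s)"
    using a unfolding u v
    by (auto simp: cart_prod_def edges_def verts_def complete_graph_def radj_def; blast)
qed

lemma nbrs_KK:
  assumes "a < t" "b < s"
  shows "nbrs (KK t s) (a,b) = {a} \<times> ({..<s} - {b}) \<union> ({..<t} - {a}) \<times> {b}"
  using assms by (auto simp: nbrs_def edge_KK radj_def)

lemma nbrs_KK_fin: "a < t \<Longrightarrow> b < s \<Longrightarrow> finite (nbrs (KK t s) (a,b))"
  by (simp add: nbrs_KK)

lemma nbrs_KK_card:
  assumes "a < t" "b < s"
  shows "card (nbrs (KK t s) (a,b)) = (s - 1) + (t - 1)"
proof -
  have "card ({a} \<times> ({..<s} - {b}) \<union> ({..<t} - {a}) \<times> {b}) = card ({a} \<times> ({..<s} - {b})) + card (({..<t} - {a}) \<times> {b})"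
    by (rule card_Un_disjoint) auto
  also have "\<dots> = (s - 1) + (t - 1)" using assms by (simp add: card_cartesian_product)
  finally show ?thesis using nbrs_KK[OF assms] by simp
qed

lemma upper_KK:
  assumes "has_toi (KK t s) k"
  shows "k \<le> t + s - 1"
proof (cases "k = 0")
  case False
  from assms obtain \<pi> P where i: "totally_odd_strong_immersion (KK t s) k \<pi> P" by (auto simp: has_toi_def)
  interpret imm "KK t s" k \<pi> P by standard (rule i)
  have k0: "0 < k" using False by simp
  obtain a b where ab: "\<pi> 0 = (a,b)" by (cases "\<pi> 0") auto
  have "\<pi> 0 \<in> verts (KK t s)" using pi_V k0 by simp
  then have abr: "a < t" "b < s" using ab by (auto simp: verts_KK)
  have "k - 1 \<le> card (nbrs (KK t s) (\<pi> 0))" using deg_bound[OF k0] nbrs_KK_fin[OF abr] ab by simp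
  then show ?thesis using nbrs_KK_card[OF abr] ab abr by simp
qed simp

lemma toi_eq:
  assumes "has_toi G k" "\<And>k'. has_toi G k' \<Longrightarrow> k' \<le> k"
  shows "toi G = k"
  unfolding toi_def using assms by (intro Greatest_equality) auto


lemma path_edges_map: "path_edges (map f p) = (\<lambda>e. f ` e) ` path_edges p"
proof (intro equalityI subsetI)
  fix x assume "x \<in> path_edges (map f p)"
  then obtain i where "i < length p - 1" "x = {f (p ! i), f (p ! Suc i)}" by (auto simp: path_edges_def)
  then show "x \<in> (\<lambda>e. f ` e) ` path_edges p" unfolding path_edges_def
    by (intro image_eqI[of _ _ "{p ! i, p ! Suc i}"]) auto
next
  fix x assume "x \<in> (\<lambda>e. f ` e) ` path_edges p"
  then obtain i where "i < length p - 1" "x = {f (p ! i), f (p ! Suc i)}" by (auto simp: path_edges_def)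
  then show "x \<in> path_edges (map f p)" unfolding path_edges_def by (auto intro!: exI[of _ i])
qed

lemma path_edges_sub: "is_path G p u v \<Longrightarrow> e \<in> path_edges p \<Longrightarrow> e \<subseteq> set p"
  unfolding path_edges_def is_path_def by auto

lemma interior_sub: "path_interior p \<subseteq> set p"
  unfolding path_interior_def using in_set_butlastD[of _ "tl p"] by (cases p) auto

lemma interior_map: "path_interior (map f p) = f ` path_interior p"
  unfolding path_interior_def by (simp flip: map_tl map_butlast)

lemma embed:
  assumes f: "inj_on f (verts G)" "f ` verts G \<subseteq> verts H"
     "\<And>u v. {u,v} \<in> edges G \<Longrightarrow> {f u, f v} \<in> edges H"
   and imm: "totally_odd_strong_immersion G k \<pi> P"
  shows "totally_odd_strong_immersion H k (f \<circ> \<pi>) (\<lambda>i j. map f (P i j))"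
proof -
  have piV: "\<pi> ` {..<k} \<subseteq> verts G" and pinj: "inj_on \<pi> {..<k}"
    using imm by (auto simp: totally_odd_strong_immersion_def)
  have A: "is_path G (P i j) (\<pi> i) (\<pi> j) \<and> odd (length (P i j) - 1) \<and> (\<forall>l<k. \<pi> l \<notin> path_interior (P i j))"
    if "i < j" "j < k" for i j
    using imm that by (auto simp: totally_odd_strong_immersion_def)
  have D: "path_edges (P i j) \<inter> path_edges (P i' j') = {}"
    if "i < j" "j < k" "i' < j'" "j' < k" "(i, j) \<noteq> (i', j')" for i j i' j'
    using imm that unfolding totally_odd_strong_immersion_def by blast
  have mp: "is_path H (map f p) (f u) (f v)" if p: "is_path G p u v" for p u v
  proof -
    have sp: "set p \<subseteq> verts G" using p by (simp add: is_path_def)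
    show ?thesis unfolding is_path_def
    proof (intro conjI allI impI)
      show "map f p \<noteq> []" "hd (map f p) = f u" "last (map f p) = f v"
        using p by (auto simp: is_path_def hd_map last_map)
      show "distinct (map f p)" using p inj_on_subset[OF f(1) sp] by (simp add: is_path_def distinct_map)
      show "set (map f p) \<subseteq> verts H" using sp f(2) by auto
      fix i assume "i < length (map f p) - 1"
      then show "{map f p ! i, map f p ! Suc i} \<in> edges H"
        using p f(3) by (auto simp: is_path_def)
    qed
  qed
  show ?thesis unfolding totally_odd_strong_immersion_def
  proof (intro conjI)
    show "inj_on (f \<circ> \<pi>) {..<k}" using comp_inj_on[OF pinj inj_on_subset[OF f(1) piV]] .
    show "(f \<circ> \<pi>) ` {..<k} \<subseteq> verts H" using piV f(2) by auto
    show "\<forall>i j. i < j \<and> j < k \<longrightarrow> is_path H (map f (P i j)) ((f \<circ> \<pi>) i) ((f \<circ> \<pi>) j) \<and>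
        odd (length (map f (P i j)) - 1) \<and> (\<forall>l<k. (f \<circ> \<pi>) l \<notin> path_interior (map f (P i j)))"
    proof (intro allI impI conjI)
    fix i j assume ij: "i < j \<and> j < k"
    note Aij = A[of i j] 
    show "is_path H (map f (P i j)) ((f \<circ> \<pi>) i) ((f \<circ> \<pi>) j)" using mp Aij ij by simp
    show "odd (length (map f (P i j)) - 1)" using Aij ij by simp
    fix l assume l: "l < k"
      show "(f \<circ> \<pi>) l \<notin> path_interior (map f (P i j))"
      proof
        assume "(f \<circ> \<pi>) l \<in> path_interior (map f (P i j))"
        then obtain x where x: "x \<in> path_interior (P i j)" "f (\<pi> l) = f x" by (auto simp: interior_map)
        have "x \<in> verts G" using x(1) interior_sub[of "P i j"] Aij ij by (auto simp: is_path_def)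
        moreover have "\<pi> l \<in> verts G" using piV l by auto
        ultimately have "x = \<pi> l" using x(2) f(1) by (auto dest: inj_onD)
        then show False using x(1) Aij ij l by auto
      qed
    qed
    show "\<forall>i j i' j'. i < j \<and> j < k \<and> i' < j' \<and> j' < k \<and> (i, j) \<noteq> (i', j') \<longrightarrow>
        path_edges (map f (P i j)) \<inter> path_edges (map f (P i' j')) = {}"
    proof (intro allI impI)
    fix i j i' j' assume a: "i < j \<and> j < k \<and> i' < j' \<and> j' < k \<and> (i, j) \<noteq> (i', j')"
    have d: "path_edges (P i j) \<inter> path_edges (P i' j') = {}" using D[of i j i' j'] a by simp
    have pa: "is_path G (P i j) (\<pi> i) (\<pi> j)" "is_path G (P i' j') (\<pi> i') (\<pi> j')" using A[of i j] A[of i' j'] a by auto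
    have s1: "\<And>e. e \<in> path_edges (P i j) \<Longrightarrow> e \<subseteq> verts G"
      using path_edges_sub[OF pa(1)] pa(1) unfolding is_path_def by blast
    have s2: "\<And>e. e \<in> path_edges (P i' j') \<Longrightarrow> e \<subseteq> verts G"
      using path_edges_sub[OF pa(2)] pa(2) unfolding is_path_def by blast
    show "path_edges (map f (P i j)) \<inter> path_edges (map f (P i' j')) = {}"
    proof (rule ccontr)
      assume "path_edges (map f (P i j)) \<inter> path_edges (map f (P i' j')) \<noteq> {}"
      then obtain e e' where e: "e \<in> path_edges (P i j)" "e' \<in> path_edges (P i' j')" "f ` e = f ` e'"
        by (auto simp: path_edges_map)
      have "e = e'" using inj_on_image_eq_iff[OF f(1) s1[OF e(1)] s2[OF e(2)]] e(3) by simp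
      then show False using d e by blast
    qed
    qed
  qed
qed

lemma has_toi_embed:
  assumes "inj_on f (verts G)" "f ` verts G \<subseteq> verts H"
     "\<And>u v. {u,v} \<in> edges G \<Longrightarrow> {f u, f v} \<in> edges H" "has_toi G k"
  shows "has_toi H k"
  using embed[OF assms(1-3)] assms(4) unfolding has_toi_def by blast

lemma has_toi_swap: "has_toi (KK s t) k \<Longrightarrow> has_toi (KK t s) k"
proof (rule has_toi_embed[where f = prod.swap])
  show "inj_on prod.swap (verts (KK s t))" by (rule inj_onI) (metis swap_swap)
  show "prod.swap ` verts (KK s t) \<subseteq> verts (KK t s)" by (auto simp: verts_KK)
  fix u v :: "nat \<times> nat" assume "{u, v} \<in> edges (KK s t)"
  then have "u \<in> {..<s} \<times> {..<t}" "v \<in> {..<s} \<times> {..<t}" "radj u v" by (simp_all add: edge_KK)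
  moreover have "radj (prod.swap u) (prod.swap v)" using \<open>radj u v\<close> by (auto simp: radj_def)
  ultimately show "{prod.swap u, prod.swap v} \<in> edges (KK t s)" by (auto simp: edge_KK)
qed


lemma is_path_2: "is_path G [x,y] u v \<longleftrightarrow> x = u \<and> y = v \<and> x \<noteq> y \<and> x \<in> verts G \<and> y \<in> verts G \<and> {x,y} \<in> edges G"
  by (auto simp: is_path_def)

lemma is_path_4: "is_path G [a,b,c,d] u v \<longleftrightarrow> a = u \<and> d = v \<and> distinct [a,b,c,d] \<and>
   a \<in> verts G \<and> b \<in> verts G \<and> c \<in> verts G \<and> d \<in> verts G \<and>
   {a,b} \<in> edges G \<and> {b,c} \<in> edges G \<and> {c,d} \<in> edges G"
proof -
  have "(\<forall>i<length [a,b,c,d] - 1. {[a,b,c,d] ! i, [a,b,c,d] ! Suc i} \<in> edges G) \<longleftrightarrow>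
     {a,b} \<in> edges G \<and> {b,c} \<in> edges G \<and> {c,d} \<in> edges G"
    by (auto simp: less_Suc_eq numeral_3_eq_3)
  then show ?thesis unfolding is_path_def by auto
qed


lemma path_edges_2: "path_edges [x,y] = {{x,y}}"
  by (auto simp: path_edges_def)

lemma three_set: "{g i |i. i < Suc (Suc (Suc 0))} = {g 0, g 1, g 2}"
  by (auto simp: less_Suc_eq numeral_2_eq_2)

lemma path_edges_4: "path_edges [a,b,c,d] = {{a,b},{b,c},{c,d}}"
  unfolding path_edges_def using three_set[of "\<lambda>i. {[a,b,c,d] ! i, [a,b,c,d] ! Suc i}"] by (simp add: numeral_3_eq_3 numeral_2_eq_2)

lemma interior_2: "path_interior [x,y] = {}" by (simp add: path_interior_def)
lemma interior_4: "path_interior [a,b,c,d] = {b,c}" by (simp add: path_interior_def)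

definition sg :: "nat \<Rightarrow> nat \<Rightarrow> nat" where "sg s b = (if b + 1 < s then b + 1 else 1)"
definition sgi :: "nat \<Rightarrow> nat \<Rightarrow> nat" where "sgi s c = (if c = 1 then s - 1 else c - 1)"

lemma sg_props:
  assumes "4 \<le> s" "1 \<le> b" "b < s"
  shows "1 \<le> sg s b" "sg s b < s" "sg s b \<noteq> b" "sgi s (sg s b) = b" "sg s (sg s b) \<noteq> b"
  using assms by (auto simp: sg_def sgi_def)

definition cidx :: "nat \<Rightarrow> nat \<Rightarrow> nat" where "cidx s a = (if a = 0 then 0 else s + a - 1)"

definition ecode :: "nat \<Rightarrow> nat \<times> nat \<Rightarrow> nat \<times> nat \<Rightarrow> nat \<times> nat" where
  "ecode s u v = (let a = fst u; b = snd u; a' = fst v; b' = snd v in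
     if a = 0 \<and> a' = 0 then (min b b', max b b')
     else if b = 0 \<and> b' = 0 then (min (cidx s a) (cidx s a'), max (cidx s a) (cidx s a'))
     else if b = b' then (b, s + max a a' - 1)
     else if b' = 0 then (sgi s b, s + a - 1)
     else if b = 0 then (sgi s b', s + a - 1)
     else if b' = sg s b then (b, s + a - 1) else (b', s + a - 1))"

definition cpi :: "nat \<Rightarrow> nat \<Rightarrow> nat \<times> nat" where
  "cpi s i = (if i < s then (0, i) else (i - s + 1, 0))"

definition cP :: "nat \<Rightarrow> nat \<Rightarrow> nat \<Rightarrow> (nat \<times> nat) list" where
  "cP s i j = (if j < s then [(0,i),(0,j)]
     else if s \<le> i then [(i - s + 1, 0), (j - s + 1, 0)]
     else if i = 0 then [(0,0), (j - s + 1, 0)]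
     else [(0,i), (j - s + 1, i), (j - s + 1, sg s i), (j - s + 1, 0)])"

lemma cP_path:
  assumes "1 \<le> t" "4 \<le> s" "i < j" "j < t + s - 1"
  shows "is_path (KK t s) (cP s i j) (cpi s i) (cpi s j) \<and> odd (length (cP s i j) - 1) \<and>
     (\<forall>l < t + s - 1. cpi s l \<notin> path_interior (cP s i j))"
proof -
  consider (r) "j < s" | (c) "s \<le> i" | (z) "i = 0" "s \<le> j" | (l) "0 < i" "i < s" "s \<le> j" using assms by linarith
  then show ?thesis
  proof cases
    case r then show ?thesis using assms
      by (auto simp: cP_def cpi_def is_path_2 interior_2 verts_KK edge_KK radj_def)
  next
    case c then show ?thesis using assms
      by (auto simp: cP_def cpi_def is_path_2 interior_2 verts_KK edge_KK radj_def)
  next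
    case z then show ?thesis using assms
      by (auto simp: cP_def cpi_def is_path_2 interior_2 verts_KK edge_KK radj_def)
  next
    case l
    have sg: "1 \<le> sg s i" "sg s i < s" "sg s i \<noteq> i" using sg_props[of s i] l assms by auto
    show ?thesis using assms l sg
      by (auto simp: cP_def cpi_def is_path_4 interior_4 verts_KK edge_KK radj_def)
  qed
qed

lemma cP_code:
  assumes "1 \<le> t" "4 \<le> s" "i < j" "j < t + s - 1" "e \<in> path_edges (cP s i j)"
  shows "\<exists>u v. e = {u,v} \<and> ecode s u v = (i,j) \<and> ecode s v u = (i,j)"
proof -
  consider (r) "j < s" | (c) "s \<le> i" | (z) "i = 0" "s \<le> j" | (l) "0 < i" "i < s" "s \<le> j" using assms by linarith
  then show ?thesis
  proof cases
    case r
    then have e: "e = {(0,i),(0,j)}" using assms(5) by (simp add: cP_def path_edges_2)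
    show ?thesis by (rule exI[of _ "(0,i)"], rule exI[of _ "(0,j)"]) (simp add: e ecode_def r assms(3) min_absorb1 max_absorb2 less_imp_le min_absorb2 max_absorb1)
  next
    case c
    define a1 where "a1 = i - s + 1"
    define a2 where "a2 = j - s + 1"
    have e: "e = {(a1, 0), (a2, 0)}" using c assms(3,5) by (simp add: cP_def path_edges_2 a1_def a2_def)
    have ci: "cidx s a1 = i" "cidx s a2 = j" using c assms(3) by (auto simp: cidx_def a1_def a2_def)
    have "a1 \<noteq> 0" "a2 \<noteq> 0" by (auto simp: a1_def a2_def)
    then show ?thesis by (intro exI[of _ "(a1, 0)"] exI[of _ "(a2, 0)"]) (simp add: e ecode_def ci assms(3) less_imp_le)
  next
    case z
    define a2 where "a2 = j - s + 1"
    have e: "e = {(0,0), (a2, 0)}" using assms(2,5) z by (simp add: cP_def path_edges_2 a2_def)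
    have ci: "cidx s 0 = 0" "cidx s a2 = j" using z assms(3) by (auto simp: cidx_def a2_def)
    have "a2 \<noteq> 0" by (auto simp: a2_def)
    then show ?thesis by (intro exI[of _ "(0,0)"] exI[of _ "(a2, 0)"]) (simp add: e ecode_def ci z)
  next
    case l
    have sg: "1 \<le> sg s i" "sg s i < s" "sg s i \<noteq> i" "sgi s (sg s i) = i" "sg s (sg s i) \<noteq> i"
      using sg_props[of s i] l assms by auto
    define a where "a = j - s + 1"
    have a: "a \<noteq> 0" "s + a - 1 = j" "s + a - Suc 0 = j" "i \<noteq> 0" using l by (auto simp: a_def)
    have "e = {(0,i), (a, i)} \<or> e = {(a, i), (a, sg s i)} \<or> e = {(a, sg s i), (a, 0)}"
      using assms(5) l by (simp add: cP_def path_edges_4 a_def)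
    then show ?thesis
    proof (elim disjE)
      assume e: "e = {(0,i), (a, i)}"
      show ?thesis by (rule exI[of _ "(0,i)"], rule exI[of _ "(a, i)"]) (simp add: e ecode_def a)
    next
      assume e: "e = {(a, i), (a, sg s i)}"
      define b where "b = sg s i"
      have b: "i \<noteq> 0" "b \<noteq> 0" "i \<noteq> b" "b \<noteq> i" "sg s b \<noteq> i" "sg s i = b" using l sg by (auto simp: b_def)
      have "ecode s (a, i) (a, b) = (i, j)" "ecode s (a, b) (a, i) = (i, j)"
        unfolding ecode_def Let_def fst_conv snd_conv using b a by simp_all
      then show ?thesis by (intro exI[of _ "(a, i)"] exI[of _ "(a, b)"]) (simp add: e b_def)
    next
      assume e: "e = {(a, sg s i), (a, 0)}"
      have "sg s i \<noteq> 0" using sg by auto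
      then show ?thesis by (intro exI[of _ "(a, sg s i)"] exI[of _ "(a, 0)"]) (simp add: e ecode_def a sg)
    qed
  qed
qed

lemma cons_imm:
  assumes "1 \<le> t" "4 \<le> s"
  shows "totally_odd_strong_immersion (KK t s) (t + s - 1) (cpi s) (cP s)"
  unfolding totally_odd_strong_immersion_def
proof (intro conjI)
  show "inj_on (cpi s) {..<t + s - 1}" by (rule inj_onI) (auto simp: cpi_def split: if_splits)
  show "cpi s ` {..<t + s - 1} \<subseteq> verts (KK t s)" using assms by (auto simp: cpi_def verts_KK)
  show "\<forall>i j. i < j \<and> j < t + s - 1 \<longrightarrow> is_path (KK t s) (cP s i j) (cpi s i) (cpi s j) \<and>
     odd (length (cP s i j) - 1) \<and> (\<forall>l<t + s - 1. cpi s l \<notin> path_interior (cP s i j))"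
    using cP_path[OF assms] by blast
  show "\<forall>i j i' j'. i < j \<and> j < t + s - 1 \<and> i' < j' \<and> j' < t + s - 1 \<and> (i, j) \<noteq> (i', j') \<longrightarrow>
      path_edges (cP s i j) \<inter> path_edges (cP s i' j') = {}"
  proof (intro allI impI)
    fix i j i' j' assume a: "i < j \<and> j < t + s - 1 \<and> i' < j' \<and> j' < t + s - 1 \<and> (i, j) \<noteq> (i', j')"
    show "path_edges (cP s i j) \<inter> path_edges (cP s i' j') = {}"
    proof (rule ccontr)
      assume "path_edges (cP s i j) \<inter> path_edges (cP s i' j') \<noteq> {}"
      then obtain e where e: "e \<in> path_edges (cP s i j)" "e \<in> path_edges (cP s i' j')" by blast
      obtain u v where uv: "e = {u,v}" "ecode s u v = (i,j)" "ecode s v u = (i,j)"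
        using cP_code[OF assms _ _ e(1)] a by blast
      obtain u' v' where uv': "e = {u',v'}" "ecode s u' v' = (i',j')"
        using cP_code[OF assms _ _ e(2)] a by blast
      have "(u' = u \<and> v' = v) \<or> (u' = v \<and> v' = u)" using uv(1) uv'(1) by (auto simp: doubleton_eq_iff)
      then have "(i',j') = (i,j)" using uv uv'(2) by auto
      then show False using a by simp
    qed
  qed
qed

lemma has_toi_cons: "1 \<le> t \<Longrightarrow> 4 \<le> s \<Longrightarrow> has_toi (KK t s) (t + s - 1)"
  unfolding has_toi_def using cons_imm by blast


lemma bool_cross9:
  fixes m :: "nat \<times> nat \<Rightarrow> bool"
  assumes "of_bool (m (0,0)) + of_bool (m (0,1)) + of_bool (m (0,2)) + of_bool (m (1,0)) + of_bool (m (1,1)) + of_bool (m (1,2)) + of_bool (m (2,0)) + of_bool (m (2,1)) + of_bool (m (2,2)) = (5::nat)"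
    "\<not> m (0,0) \<Longrightarrow> of_bool (m (0,1)) + of_bool (m (0,2)) + of_bool (m (1,0)) + of_bool (m (2,0)) \<le> (2::nat)"
    "\<not> m (0,1) \<Longrightarrow> of_bool (m (0,0)) + of_bool (m (0,2)) + of_bool (m (1,1)) + of_bool (m (2,1)) \<le> (2::nat)"
    "\<not> m (0,2) \<Longrightarrow> of_bool (m (0,0)) + of_bool (m (0,1)) + of_bool (m (1,2)) + of_bool (m (2,2)) \<le> (2::nat)"
    "\<not> m (1,0) \<Longrightarrow> of_bool (m (0,0)) + of_bool (m (1,1)) + of_bool (m (1,2)) + of_bool (m (2,0)) \<le> (2::nat)"
    "\<not> m (1,1) \<Longrightarrow> of_bool (m (0,1)) + of_bool (m (1,0)) + of_bool (m (1,2)) + of_bool (m (2,1)) \<le> (2::nat)"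
    "\<not> m (1,2) \<Longrightarrow> of_bool (m (0,2)) + of_bool (m (1,0)) + of_bool (m (1,1)) + of_bool (m (2,2)) \<le> (2::nat)"
    "\<not> m (2,0) \<Longrightarrow> of_bool (m (0,0)) + of_bool (m (1,0)) + of_bool (m (2,1)) + of_bool (m (2,2)) \<le> (2::nat)"
    "\<not> m (2,1) \<Longrightarrow> of_bool (m (0,1)) + of_bool (m (1,1)) + of_bool (m (2,0)) + of_bool (m (2,2)) \<le> (2::nat)"
    "\<not> m (2,2) \<Longrightarrow> of_bool (m (0,2)) + of_bool (m (1,2)) + of_bool (m (2,0)) + of_bool (m (2,1)) \<le> (2::nat)"
  shows "(m (0,0) \<and> m (0,1) \<and> m (0,2) \<and> m (1,0) \<and> m (2,0)) \<or> (m (0,0) \<and> m (0,1) \<and> m (0,2) \<and> m (1,1) \<and> m (2,1)) \<or> (m (0,0) \<and> m (0,1) \<and> m (0,2) \<and> m (1,2) \<and> m (2,2)) \<or> (m (0,0) \<and> m (1,0) \<and> m (1,1) \<and> m (1,2) \<and> m (2,0)) \<or> (m (0,1) \<and> m (1,0) \<and> m (1,1) \<and> m (1,2) \<and> m (2,1)) \<or> (m (0,2) \<and> m (1,0) \<and> m (1,1) \<and> m (1,2) \<and> m (2,2)) \<or> (m (0,0) \<and> m (1,0) \<and> m (2,0) \<and> m (2,1) \<and> m (2,2)) \<or> (m (0,1) \<and> m (1,1) \<and> m (2,0) \<and> m (2,1) \<and> m (2,2)) \<or> (m (0,2) \<and> m (1,2) \<and> m (2,0) \<and> m (2,1) \<and>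 m (2,2))"
  using assms
  by (cases "m (0,0)"; simp; cases "m (0,1)"; simp; cases "m (0,2)"; simp; cases "m (1,0)"; simp; cases "m (1,1)"; simp; cases "m (1,2)"; simp; cases "m (2,0)"; simp; cases "m (2,1)"; simp; cases "m (2,2)"; simp)


lemma pair_opts:
  assumes "a0 < 3" "b0 < 3" "a < 3" "b < 3" "a' < 3" "b' < 3"
    "a \<noteq> a0" "a' \<noteq> a0" "a \<noteq> a'" "b \<noteq> b0" "b' \<noteq> b0" "b \<noteq> b'"
    "fst X < 3" "snd X < 3" "fst Y < 3" "snd Y < 3"
    "fst X \<noteq> a0" "snd X \<noteq> b0" "fst Y \<noteq> a0" "snd Y \<noteq> b0"
    "radj (a0,b) X" "radj X Y" "radj Y (a,b0)"
  shows "(X = (a,b) \<and> Y = (a,b')) \<or> (X = (a',b) \<and> Y = (a,b))"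
  using assms by (cases X, cases Y) (auto simp: radj_def)

lemma final3:
  fixes X Y :: "nat \<Rightarrow> nat \<Rightarrow> nat \<times> nat"
  assumes "a0 < 3" "b0 < 3"
    and H: "\<And>a b. a < 3 \<Longrightarrow> b < 3 \<Longrightarrow> a \<noteq> a0 \<Longrightarrow> b \<noteq> b0 \<Longrightarrow>
      fst (X a b) < 3 \<and> snd (X a b) < 3 \<and> fst (Y a b) < 3 \<and> snd (Y a b) < 3 \<and>
      fst (X a b) \<noteq> a0 \<and> snd (X a b) \<noteq> b0 \<and> fst (Y a b) \<noteq> a0 \<and> snd (Y a b) \<noteq> b0 \<and>
      radj (a0,b) (X a b) \<and> radj (X a b) (Y a b) \<and> radj (Y a b) (a,b0)"
    and D: "\<And>a b a' b'. a < 3 \<Longrightarrow> b < 3 \<Longrightarrow> a \<noteq> a0 \<Longrightarrow> b \<noteq> b0 \<Longrightarrow>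
       a' < 3 \<Longrightarrow> b' < 3 \<Longrightarrow> a' \<noteq> a0 \<Longrightarrow> b' \<noteq> b0 \<Longrightarrow> (a,b) \<noteq> (a',b') \<Longrightarrow>
       {{(a0,b), X a b}, {X a b, Y a b}, {Y a b, (a,b0)}} \<inter>
       {{(a0,b'), X a' b'}, {X a' b', Y a' b'}, {Y a' b', (a',b0)}} = {}"
  shows False
proof -
  define a1 where "a1 = (if a0 = 0 then 1 else (0::nat))"
  define a2 where "a2 = (if a0 = 2 then 1 else (2::nat))"
  define b1 where "b1 = (if b0 = 0 then 1 else (0::nat))"
  define b2 where "b2 = (if b0 = 2 then 1 else (2::nat))"
  have a: "a1 < 3" "a2 < 3" "a1 \<noteq> a0" "a2 \<noteq> a0" "a1 \<noteq> a2"
    using assms(1) by (auto simp: a1_def a2_def)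
  have b: "b1 < 3" "b2 < 3" "b1 \<noteq> b0" "b2 \<noteq> b0" "b1 \<noteq> b2"
    using assms(2) by (auto simp: b1_def b2_def)
  have o11: "(X a1 b1 = (a1,b1) \<and> Y a1 b1 = (a1,b2)) \<or> (X a1 b1 = (a2,b1) \<and> Y a1 b1 = (a1,b1))"
    using H[of a1 b1] a b assms(1,2) by (intro pair_opts) auto
  have o12: "(X a1 b2 = (a1,b2) \<and> Y a1 b2 = (a1,b1)) \<or> (X a1 b2 = (a2,b2) \<and> Y a1 b2 = (a1,b2))"
    using H[of a1 b2] a b assms(1,2) by (intro pair_opts) auto
  have o21: "(X a2 b1 = (a2,b1) \<and> Y a2 b1 = (a2,b2)) \<or> (X a2 b1 = (a1,b1) \<and> Y a2 b1 = (a2,b1))"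
    using H[of a2 b1] a b assms(1,2) by (intro pair_opts) auto
  have o22: "(X a2 b2 = (a2,b2) \<and> Y a2 b2 = (a2,b1)) \<or> (X a2 b2 = (a1,b2) \<and> Y a2 b2 = (a2,b2))"
    using H[of a2 b2] a b assms(1,2) by (intro pair_opts) auto
  have d1: "{{(a0,b1), X a1 b1}, {X a1 b1, Y a1 b1}, {Y a1 b1, (a1,b0)}} \<inter>
       {{(a0,b1), X a2 b1}, {X a2 b1, Y a2 b1}, {Y a2 b1, (a2,b0)}} = {}"
    using D[of a1 b1 a2 b1] a b by auto
  have d2: "{{(a0,b2), X a1 b2}, {X a1 b2, Y a1 b2}, {Y a1 b2, (a1,b0)}} \<inter>
       {{(a0,b2), X a2 b2}, {X a2 b2, Y a2 b2}, {Y a2 b2, (a2,b0)}} = {}"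
    using D[of a1 b2 a2 b2] a b by auto
  have d3: "{{(a0,b1), X a1 b1}, {X a1 b1, Y a1 b1}, {Y a1 b1, (a1,b0)}} \<inter>
       {{(a0,b2), X a1 b2}, {X a1 b2, Y a1 b2}, {Y a1 b2, (a1,b0)}} = {}"
    using D[of a1 b1 a1 b2] a b by auto
  have d4: "{{(a0,b1), X a2 b1}, {X a2 b1, Y a2 b1}, {Y a2 b1, (a2,b0)}} \<inter>
       {{(a0,b2), X a2 b2}, {X a2 b2, Y a2 b2}, {Y a2 b2, (a2,b0)}} = {}"
    using D[of a2 b1 a2 b2] a b by auto
  have ne: "(a1,b1) \<noteq> (a2,b1)" "(a1,b2) \<noteq> (a2,b2)" "(a1,b1) \<noteq> (a1,b2)" "(a2,b1) \<noteq> (a2,b2)"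
    "(a2,b1) \<noteq> (a1,b1)" "(a2,b2) \<noteq> (a1,b2)" "(a1,b2) \<noteq> (a1,b1)" "(a2,b2) \<noteq> (a2,b1)"
    using a b by auto
  have e1: "X a1 b1 = (a1,b1) \<longleftrightarrow> X a2 b1 = (a2,b1)"
  proof (cases "X a1 b1 = (a1,b1)")
    case True
    then have Y: "Y a1 b1 = (a1,b2)" using o11 ne a(5) b(5) by auto
    show ?thesis
    proof (rule ccontr)
      assume "\<not> ?thesis"
      then have "X a2 b1 = (a1,b1)" using o21 True a(5) b(5) by auto
      then show False using d1 True by auto
    qed
  next
    case False
    then have X: "X a1 b1 = (a2,b1)" using o11 a(5) b(5) by auto
    show ?thesis
    proof (rule ccontr)
      assume "\<not> ?thesis"
      then have "X a2 b1 = (a2,b1)" using False by auto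
      then show False using d1 X by auto
    qed
  qed
  have e2: "X a1 b2 = (a1,b2) \<longleftrightarrow> X a2 b2 = (a2,b2)"
  proof (cases "X a1 b2 = (a1,b2)")
    case True
    show ?thesis
    proof (rule ccontr)
      assume "\<not> ?thesis"
      then have "X a2 b2 = (a1,b2)" using o22 True a(5) b(5) by auto
      then show False using d2 True by auto
    qed
  next
    case False
    then have X: "X a1 b2 = (a2,b2)" using o12 a(5) b(5) by auto
    show ?thesis
    proof (rule ccontr)
      assume "\<not> ?thesis"
      then have "X a2 b2 = (a2,b2)" using False by auto
      then show False using d2 X by auto
    qed
  qed
  have e3: "X a1 b1 = (a1,b1) \<longleftrightarrow> X a1 b2 = (a1,b2)"
  proof (cases "X a1 b1 = (a1,b1)")
    case True
    then have Y: "Y a1 b1 = (a1,b2)" using o11 ne a(5) b(5) by auto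
    show ?thesis
    proof (rule ccontr)
      assume "\<not> ?thesis"
      then have "Y a1 b2 = (a1,b2)" using o12 True a(5) b(5) by auto
      then show False using d3 Y by auto
    qed
  next
    case False
    then have Y: "Y a1 b1 = (a1,b1)" using o11 a(5) b(5) by auto
    show ?thesis
    proof (rule ccontr)
      assume "\<not> ?thesis"
      then have "Y a1 b2 = (a1,b1)" using o12 False a(5) b(5) by auto
      then show False using d3 Y by auto
    qed
  qed
  have e4: "X a2 b1 = (a2,b1) \<longleftrightarrow> X a2 b2 = (a2,b2)"
  proof (cases "X a2 b1 = (a2,b1)")
    case True
    then have Y: "Y a2 b1 = (a2,b2)" using o21 ne a(5) b(5) by auto
    show ?thesis
    proof (rule ccontr)
      assume "\<not> ?thesis"
      then have "Y a2 b2 = (a2,b2)" using o22 True a(5) b(5) by auto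
      then show False using d4 Y by auto
    qed
  next
    case False
    then have Y: "Y a2 b1 = (a2,b1)" using o21 a(5) b(5) by auto
    show ?thesis
    proof (rule ccontr)
      assume "\<not> ?thesis"
      then have "Y a2 b2 = (a2,b1)" using o22 False a(5) b(5) by auto
      then show False using d4 Y by auto
    qed
  qed
  show False
  proof (cases "X a1 b1 = (a1,b1)")
    case True
    then have "X a1 b2 = (a1,b2)" "Y a1 b1 = (a1,b2)" using e3 o11 ne by auto
    moreover have "Y a1 b2 = (a1,b1)" using o12 calculation(1) ne a(5) b(5) by auto
    ultimately show False using d3 True by (auto simp: insert_commute)
  next
    case False
    then have "X a1 b1 = (a2,b1)" "Y a1 b1 = (a1,b1)" using o11 a(5) b(5) by auto
    moreover have "X a2 b1 = (a1,b1)" "Y a2 b1 = (a2,b1)" using e1 False o21 ne by auto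
    ultimately show False using d1 by (auto simp: insert_commute)
  qed
qed


context imm begin

lemma TI_card:
  "card {u\<in>{..<k}. {\<pi> u, w} \<in> edges G} = card (\<pi> ` {..<k} \<inter> nbrs G w)"
proof -
  have "\<pi> ` {u\<in>{..<k}. {\<pi> u, w} \<in> edges G} = \<pi> ` {..<k} \<inter> nbrs G w"
    by (auto simp: nbrs_def insert_commute)
  moreover have "inj_on \<pi> {u\<in>{..<k}. {\<pi> u, w} \<in> edges G}" using inj by (rule inj_on_subset) auto
  ultimately show ?thesis by (metis card_image)
qed

lemma split_card:
  assumes "finite (nbrs G w)"
  shows "card (\<pi> ` {..<k} \<inter> nbrs G w) + card {v \<in> nbrs G w. v \<notin> \<pi> ` {..<k}} = card (nbrs G w)"
proof -
  have "nbrs G w = (\<pi> ` {..<k} \<inter> nbrs G w) \<union> {v \<in> nbrs G w. v \<notin> \<pi> ` {..<k}}" by blast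
  moreover have "card ((\<pi> ` {..<k} \<inter> nbrs G w) \<union> {v \<in> nbrs G w. v \<notin> \<pi> ` {..<k}}) =
      card (\<pi> ` {..<k} \<inter> nbrs G w) + card {v \<in> nbrs G w. v \<notin> \<pi> ` {..<k}}"
    by (rule card_Un_disjoint) (use assms in auto)
  ultimately show ?thesis by simp
qed

end

lemma KK_reg:
  assumes "totally_odd_strong_immersion (KK t s) k \<pi> P" "(s - 1) + (t - 1) \<le> k - 1"
  shows "\<forall>i<k. finite (nbrs (KK t s) (\<pi> i)) \<and> card (nbrs (KK t s) (\<pi> i)) \<le> k - 1"
proof (intro allI impI)
  fix i assume i: "i < k"
  interpret imm "KK t s" k \<pi> P by standard (rule assms(1))
  obtain a b where ab: "\<pi> i = (a,b)" by (cases "\<pi> i") auto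
  have "a < t" "b < s" using pi_V[OF i] ab by (auto simp: verts_KK)
  then show "finite (nbrs (KK t s) (\<pi> i)) \<and> card (nbrs (KK t s) (\<pi> i)) \<le> k - 1"
    using nbrs_KK_fin nbrs_KK_card assms(2) ab by simp
qed

lemma prism_no4: "\<not> has_toi (KK 2 3) 4"
proof
  assume "has_toi (KK 2 3) 4"
  then obtain \<pi> P where i: "totally_odd_strong_immersion (KK 2 3) 4 \<pi> P" by (auto simp: has_toi_def)
  interpret imm "KK 2 3" 4 \<pi> P by standard (rule i)
  have reg: "\<forall>i<4. finite (nbrs (KK 2 3) (\<pi> i)) \<and> card (nbrs (KK 2 3) (\<pi> i)) \<le> 4 - 1"
    using KK_reg[OF i] by simp
  define T where "T = \<pi> ` {..<4}"
  define V where "V = verts (KK 2 3)"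
  have cT: "card T = 4" using card_image[OF inj] by (simp add: T_def)
  have TV: "T \<subseteq> V" using pi_V by (auto simp: T_def V_def)
  have fV: "finite V" and cV: "card V = 6" by (simp_all add: V_def verts_KK card_cartesian_product)
  have cVT: "card (V - T) = 2" using card_Diff_subset[OF finite_subset[OF TV fV] TV] cT cV by simp
  then obtain w where w: "w \<in> V" "w \<notin> T"
    by (metis Diff_iff card_0_eq ex_in_conv fV finite_Diff zero_neq_numeral)
  obtain a b where ab: "w = (a,b)" by (cases w) auto
  have abr: "a < 2" "b < 3" using w ab by (auto simp: V_def verts_KK)
  have fn: "finite (nbrs (KK 2 3) w)" using nbrs_KK_fin abr ab by simp
  have cn: "card (nbrs (KK 2 3) w) = 3" using nbrs_KK_card[OF abr] ab by simp
  have "{v \<in> nbrs (KK 2 3) w. v \<notin> T} \<subseteq> (V - T) - {w}"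
    by (auto simp: nbrs_def V_def edge_KK radj_def verts_KK)
  then have cNN: "card {v \<in> nbrs (KK 2 3) w. v \<notin> T} \<le> 1"
    using card_mono[of "(V - T) - {w}"] cVT w fV by fastforce
  have z: "card {u\<in>{..<4}. {\<pi> u, w} \<in> edges (KK 2 3)} \<le> card {v \<in> nbrs (KK 2 3) w. v \<notin> T}"
    using zcard[OF reg] w fn by (simp add: T_def V_def)
  show False using z cNN split_card[OF fn] TI_card[of w] cn by (simp add: T_def)
qed


definition L9 :: "(nat \<times> nat) list" where
  "L9 = [(0,0),(0,1),(0,2),(1,0),(1,1),(1,2),(2,0),(2,1),(2,2)]"

lemma lt3: "(a::nat) < 3 \<longleftrightarrow> a = 0 \<or> a = 1 \<or> a = 2" by arith
lemma lt4: "(a::nat) < 4 \<longleftrightarrow> a = 0 \<or> a = 1 \<or> a = 2 \<or> a = 3" by arith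
lemma lt3set: "{..<3::nat} = {0,1,2}" by (auto simp: lt3)
lemma ex_less3: "(\<exists>a<(3::nat). P a) \<longleftrightarrow> P 0 \<or> P 1 \<or> P 2"
  by (auto simp: lt3)
lemma V9: "{..<3::nat} \<times> {..<3::nat} = set L9"
  unfolding lt3set L9_def by auto

lemma card_inter_list: "distinct xs \<Longrightarrow> card (T \<inter> set xs) = (\<Sum>c\<leftarrow>xs. of_bool (c \<in> T))"
  by (induction xs) (auto simp: Int_insert_right card_insert_if)

lemma nbrs9: "w \<in> set L9 \<Longrightarrow> nbrs (KK 3 3) w = set (filter (radj w) L9)"
  by (auto simp: nbrs_def edge_KK V9)

definition Cr :: "nat \<Rightarrow> nat \<Rightarrow> (nat \<times> nat) set" where
  "Cr a0 b0 = {c \<in> {..<3} \<times> {..<3}. fst c = a0 \<or> snd c = b0}"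

lemma Cr_list: "Cr a0 b0 = set (filter (\<lambda>c. fst c = a0 \<or> snd c = b0) L9)"
  unfolding Cr_def V9 by auto

lemma Cr_card: assumes "a0 < 3" "b0 < 3" shows "card (Cr a0 b0) = 5"
proof -
  have "a0 = 0 \<or> a0 = 1 \<or> a0 = 2" "b0 = 0 \<or> b0 = 1 \<or> b0 = 2" using assms by arith+
  then show ?thesis unfolding Cr_list by (elim disjE) (simp_all add: L9_def)
qed

lemma list4: "length p = 4 \<Longrightarrow> p = [p!0, p!1, p!2, p!3]"
  by (rule nth_equalityI) (auto simp: lt4)

lemma K33_no5: "\<not> has_toi (KK 3 3) 5"
proof
  assume "has_toi (KK 3 3) 5"
  then obtain \<pi> P where i: "totally_odd_strong_immersion (KK 3 3) 5 \<pi> P" by (auto simp: has_toi_def)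
  interpret imm "KK 3 3" 5 \<pi> P by standard (rule i)
  have reg: "\<forall>i<5. finite (nbrs (KK 3 3) (\<pi> i)) \<and> card (nbrs (KK 3 3) (\<pi> i)) \<le> 5 - 1"
    using KK_reg[OF i] by simp
  define T where "T = \<pi> ` {..<5}"
  define V where "V = verts (KK 3 3)"
  have cT: "card T = 5" using card_image[OF inj] by (simp add: T_def)
  have TV: "T \<subseteq> V" using pi_V by (auto simp: T_def V_def)
  have fV: "finite V" by (simp add: V_def verts_KK)
  have fT: "finite T" using finite_subset[OF TV fV] .
  have cT2: "card (T \<inter> nbrs (KK 3 3) w) \<le> 2" if w: "w \<in> V" "w \<notin> T" for w
  proof -
    obtain a b where ab: "w = (a,b)" by (cases w) auto
    have abr: "a < 3" "b < 3" using w ab by (auto simp: V_def verts_KK)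
    have fn: "finite (nbrs (KK 3 3) w)" using nbrs_KK_fin abr ab by simp
    have cn: "card (nbrs (KK 3 3) w) = 4" using nbrs_KK_card[OF abr] ab by simp
    have z: "card {u\<in>{..<5}. {\<pi> u, w} \<in> edges (KK 3 3)} \<le> card {v \<in> nbrs (KK 3 3) w. v \<notin> T}"
      using zcard[OF reg] w fn by (simp add: T_def V_def)
    show ?thesis using z split_card[OF fn] TI_card[of w] cn by (simp add: T_def)
  qed
  have hyp1: "of_bool ((0,0) \<in> T) + of_bool ((0,1) \<in> T) + of_bool ((0,2) \<in> T) + of_bool ((1,0) \<in> T) + of_bool ((1,1) \<in> T)
     + of_bool ((1,2) \<in> T) + of_bool ((2,0) \<in> T) + of_bool ((2,1) \<in> T) + of_bool ((2,2) \<in> T) = (5::nat)"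
  proof -
    have "T \<inter> set L9 = T" using TV by (auto simp: V_def verts_KK V9)
    then have "card (T \<inter> set L9) = 5" using cT by simp
    then show ?thesis by (subst (asm) card_inter_list) (simp_all add: L9_def)
  qed
  have n00: "nbrs (KK 3 3) (0,0) = set [(0,1),(0,2),(1,0),(2,0)]" by (subst nbrs9) (simp_all add: L9_def radj_def)
  have h00: "\<not> (0,0) \<in> T \<Longrightarrow> of_bool ((0,1) \<in> T) + of_bool ((0,2) \<in> T) + of_bool ((1,0) \<in> T) + of_bool ((2,0) \<in> T) \<le> (2::nat)"
  proof -
    assume a: "\<not> (0,0) \<in> T"
    have "card (T \<inter> set [(0,1),(0,2),(1,0),(2,0)]) \<le> 2" using cT2[of "(0,0)"] a n00 by (simp add: V_def verts_KK)
    then show ?thesis by (subst (asm) card_inter_list) simp_all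
  qed
  have n01: "nbrs (KK 3 3) (0,1) = set [(0,0),(0,2),(1,1),(2,1)]" by (subst nbrs9) (simp_all add: L9_def radj_def)
  have h01: "\<not> (0,1) \<in> T \<Longrightarrow> of_bool ((0,0) \<in> T) + of_bool ((0,2) \<in> T) + of_bool ((1,1) \<in> T) + of_bool ((2,1) \<in> T) \<le> (2::nat)"
  proof -
    assume a: "\<not> (0,1) \<in> T"
    have "card (T \<inter> set [(0,0),(0,2),(1,1),(2,1)]) \<le> 2" using cT2[of "(0,1)"] a n01 by (simp add: V_def verts_KK)
    then show ?thesis by (subst (asm) card_inter_list) simp_all
  qed
  have n02: "nbrs (KK 3 3) (0,2) = set [(0,0),(0,1),(1,2),(2,2)]" by (subst nbrs9) (simp_all add: L9_def radj_def)
  have h02: "\<not> (0,2) \<in> T \<Longrightarrow> of_bool ((0,0) \<in> T) + of_bool ((0,1) \<in> T) + of_bool ((1,2) \<in> T) + of_bool ((2,2) \<in> T) \<le> (2::nat)"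
  proof -
    assume a: "\<not> (0,2) \<in> T"
    have "card (T \<inter> set [(0,0),(0,1),(1,2),(2,2)]) \<le> 2" using cT2[of "(0,2)"] a n02 by (simp add: V_def verts_KK)
    then show ?thesis by (subst (asm) card_inter_list) simp_all
  qed
  have n10: "nbrs (KK 3 3) (1,0) = set [(0,0),(1,1),(1,2),(2,0)]" by (subst nbrs9) (simp_all add: L9_def radj_def)
  have h10: "\<not> (1,0) \<in> T \<Longrightarrow> of_bool ((0,0) \<in> T) + of_bool ((1,1) \<in> T) + of_bool ((1,2) \<in> T) + of_bool ((2,0) \<in> T) \<le> (2::nat)"
  proof -
    assume a: "\<not> (1,0) \<in> T"
    have "card (T \<inter> set [(0,0),(1,1),(1,2),(2,0)]) \<le> 2" using cT2[of "(1,0)"] a n10 by (simp add: V_def verts_KK)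
    then show ?thesis by (subst (asm) card_inter_list) simp_all
  qed
  have n11: "nbrs (KK 3 3) (1,1) = set [(0,1),(1,0),(1,2),(2,1)]" by (subst nbrs9) (simp_all add: L9_def radj_def)
  have h11: "\<not> (1,1) \<in> T \<Longrightarrow> of_bool ((0,1) \<in> T) + of_bool ((1,0) \<in> T) + of_bool ((1,2) \<in> T) + of_bool ((2,1) \<in> T) \<le> (2::nat)"
  proof -
    assume a: "\<not> (1,1) \<in> T"
    have "card (T \<inter> set [(0,1),(1,0),(1,2),(2,1)]) \<le> 2" using cT2[of "(1,1)"] a n11 by (simp add: V_def verts_KK)
    then show ?thesis by (subst (asm) card_inter_list) simp_all
  qed
  have n12: "nbrs (KK 3 3) (1,2) = set [(0,2),(1,0),(1,1),(2,2)]" by (subst nbrs9) (simp_all add: L9_def radj_def)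
  have h12: "\<not> (1,2) \<in> T \<Longrightarrow> of_bool ((0,2) \<in> T) + of_bool ((1,0) \<in> T) + of_bool ((1,1) \<in> T) + of_bool ((2,2) \<in> T) \<le> (2::nat)"
  proof -
    assume a: "\<not> (1,2) \<in> T"
    have "card (T \<inter> set [(0,2),(1,0),(1,1),(2,2)]) \<le> 2" using cT2[of "(1,2)"] a n12 by (simp add: V_def verts_KK)
    then show ?thesis by (subst (asm) card_inter_list) simp_all
  qed
  have n20: "nbrs (KK 3 3) (2,0) = set [(0,0),(1,0),(2,1),(2,2)]" by (subst nbrs9) (simp_all add: L9_def radj_def)
  have h20: "\<not> (2,0) \<in> T \<Longrightarrow> of_bool ((0,0) \<in> T) + of_bool ((1,0) \<in> T) + of_bool ((2,1) \<in> T) + of_bool ((2,2) \<in> T) \<le> (2::nat)"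
  proof -
    assume a: "\<not> (2,0) \<in> T"
    have "card (T \<inter> set [(0,0),(1,0),(2,1),(2,2)]) \<le> 2" using cT2[of "(2,0)"] a n20 by (simp add: V_def verts_KK)
    then show ?thesis by (subst (asm) card_inter_list) simp_all
  qed
  have n21: "nbrs (KK 3 3) (2,1) = set [(0,1),(1,1),(2,0),(2,2)]" by (subst nbrs9) (simp_all add: L9_def radj_def)
  have h21: "\<not> (2,1) \<in> T \<Longrightarrow> of_bool ((0,1) \<in> T) + of_bool ((1,1) \<in> T) + of_bool ((2,0) \<in> T) + of_bool ((2,2) \<in> T) \<le> (2::nat)"
  proof -
    assume a: "\<not> (2,1) \<in> T"
    have "card (T \<inter> set [(0,1),(1,1),(2,0),(2,2)]) \<le> 2" using cT2[of "(2,1)"] a n21 by (simp add: V_def verts_KK)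
    then show ?thesis by (subst (asm) card_inter_list) simp_all
  qed
  have n22: "nbrs (KK 3 3) (2,2) = set [(0,2),(1,2),(2,0),(2,1)]" by (subst nbrs9) (simp_all add: L9_def radj_def)
  have h22: "\<not> (2,2) \<in> T \<Longrightarrow> of_bool ((0,2) \<in> T) + of_bool ((1,2) \<in> T) + of_bool ((2,0) \<in> T) + of_bool ((2,1) \<in> T) \<le> (2::nat)"
  proof -
    assume a: "\<not> (2,2) \<in> T"
    have "card (T \<inter> set [(0,2),(1,2),(2,0),(2,1)]) \<le> 2" using cT2[of "(2,2)"] a n22 by (simp add: V_def verts_KK)
    then show ?thesis by (subst (asm) card_inter_list) simp_all
  qed
  have B: "((0,0) \<in> T \<and> (0,1) \<in> T \<and> (0,2) \<in> T \<and> (1,0) \<in> T \<and> (2,0) \<in> T) \<or> ((0,0) \<in> T \<and> (0,1) \<in> T \<and> (0,2) \<in> T \<and> (1,1) \<in> T \<and> (2,1) \<in> T) \<or> ((0,0) \<in> T \<and> (0,1) \<in> T \<and> (0,2) \<in> T \<and> (1,2) \<in> T \<and> (2,2) \<in> T) \<or> ((0,0) \<in> T \<and> (1,0) \<in> T \<and> (1,1) \<in> T \<and> (1,2) \<in> T \<and> (2,0) \<in> T) \<or> ((0,1) \<in> T \<and> (1,0) \<in> T \<and> (1,1) \<in> T \<and> (1,2) \<in> T \<and> (2,1) \<in> T) \<or> ((0,2) \<in> T \<and> (1,0) \<in> T \<and> (1,1) \<in> T \<and> (1,2) \<in> T \<and> (2,2) \<in> T) \<or> ((0,0) \<in> T \<and>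 (1,0) \<in> T \<and> (2,0) \<in> T \<and> (2,1) \<in> T \<and> (2,2) \<in> T) \<or> ((0,1) \<in> T \<and> (1,1) \<in> T \<and> (2,0) \<in> T \<and> (2,1) \<in> T \<and> (2,2) \<in> T) \<or> ((0,2) \<in> T \<and> (1,2) \<in> T \<and> (2,0) \<in> T \<and> (2,1) \<in> T \<and> (2,2) \<in> T)"
    by (rule bool_cross9[of "\<lambda>c. c \<in> T", OF hyp1 h00 h01 h02 h10 h11 h12 h20 h21 h22])
  have "\<exists>a0<3. \<exists>b0<3. set (filter (\<lambda>c. fst c = a0 \<or> snd c = b0) L9) \<subseteq> T"
    unfolding ex_less3 using B by (elim disjE) (simp_all add: L9_def)
  then obtain a0 b0 where ab0: "a0 < 3" "b0 < 3" "Cr a0 b0 \<subseteq> T" unfolding Cr_list by blast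
  have TC: "T = Cr a0 b0"
    using card_subset_eq[OF fT ab0(3)] Cr_card[OF ab0(1,2)] cT by simp
  have inT: "c \<in> T \<longleftrightarrow> c \<in> V \<and> (fst c = a0 \<or> snd c = b0)" for c
    unfolding TC by (auto simp: Cr_def V_def verts_KK)
  have tight: "finite (nbrs (KK 3 3) w) \<and> card {v \<in> nbrs (KK 3 3) w. v \<notin> \<pi> ` {..<5}}
      \<le> card {u\<in>{..<5}. {\<pi> u, w} \<in> edges (KK 3 3)}"
    if w: "w \<in> verts (KK 3 3)" "w \<notin> \<pi> ` {..<5}" for w
  proof -
    obtain x y where xy: "w = (x,y)" by (cases w) auto
    have xyr: "x < 3" "y < 3" using w xy by (auto simp: verts_KK)
    have nT: "x \<noteq> a0" "y \<noteq> b0" using w xy inT[of w] by (auto simp: T_def V_def)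
    have fn: "finite (nbrs (KK 3 3) w)" using nbrs_KK_fin xyr xy by simp
    have cn: "card (nbrs (KK 3 3) w) = 4" using nbrs_KK_card[OF xyr] xy by simp
    have "T \<inter> nbrs (KK 3 3) w = {(a0,y),(x,b0)}"
      unfolding xy nbrs_KK[OF xyr] using nT xyr ab0 by (auto simp: inT V_def verts_KK)
    then have c2: "card (T \<inter> nbrs (KK 3 3) w) = 2" using nT by simp
    show ?thesis using split_card[OF fn] TI_card[of w] cn c2 fn by (simp add: T_def)
  qed
  have short: "length (pth P i j) = 4" if "i < 5" "j < 5" "i \<noteq> j" "{\<pi> i, \<pi> j} \<notin> edges (KK 3 3)" for i j
    using short_paths[OF reg tight] that by blast
  define ix where "ix c = inv_into {..<5} \<pi> c" for c
  have ixp: "ix c < 5" "\<pi> (ix c) = c" if "c \<in> T" for c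
    using that inv_into_f_f[OF inj] by (auto simp: ix_def T_def)
  define X where "X a b = pth P (ix (a0,b)) (ix (a,b0)) ! 1" for a b
  define Y where "Y a b = pth P (ix (a0,b)) (ix (a,b0)) ! 2" for a b
  have key: "ix (a0,b) < 5 \<and> ix (a,b0) < 5 \<and> ix (a0,b) \<noteq> ix (a,b0) \<and>
      \<pi> (ix (a0,b)) = (a0,b) \<and> \<pi> (ix (a,b0)) = (a,b0) \<and>
      pth P (ix (a0,b)) (ix (a,b0)) = [(a0,b), X a b, Y a b, (a,b0)] \<and>
      X a b \<in> V \<and> X a b \<notin> T \<and> Y a b \<in> V \<and> Y a b \<notin> T"
    if ab: "a < 3" "b < 3" "a \<noteq> a0" "b \<noteq> b0" for a b
  proof -
    define i where "i = ix (a0,b)"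
    define j where "j = ix (a,b0)"
    have cT: "(a0,b) \<in> T" "(a,b0) \<in> T" using ab ab0 by (auto simp: inT V_def verts_KK)
    have ij: "i < 5" "j < 5" "\<pi> i = (a0,b)" "\<pi> j = (a,b0)" using ixp cT by (auto simp: i_def j_def)
    have ne: "i \<noteq> j" using ij ab by auto
    have ne2: "{\<pi> i, \<pi> j} \<notin> edges (KK 3 3)" using ij ab by (simp add: edge_KK radj_def)
    define p where "p = pth P i j"
    have L: "length p = 4" using short[OF ij(1,2) ne ne2] by (simp add: p_def)
    have p0: "p ! 0 = (a0,b)" "p ! 3 = (a,b0)" using pth_basic(1,2)[OF ij(1,2) ne] ij L by (simp_all add: p_def)
    have peq: "p = [(a0,b), X a b, Y a b, (a,b0)]"
      using list4[OF L] p0 by (simp add: X_def Y_def p_def i_def j_def)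
    have sp: "set p \<subseteq> V" using pth_basic(4)[OF ij(1,2) ne] by (simp add: p_def V_def)
    have "\<forall>l<5. p ! 1 \<noteq> \<pi> l" "\<forall>l<5. p ! 2 \<noteq> \<pi> l"
      using interior_notin[OF ij(1,2) ne, of 1] interior_notin[OF ij(1,2) ne, of 2] L by (simp_all add: p_def)
    then have "X a b \<notin> T" "Y a b \<notin> T" using peq by (auto simp: T_def)
    moreover have "X a b \<in> V" "Y a b \<in> V" using sp peq by auto
    ultimately show ?thesis using ij ne peq by (simp add: i_def j_def p_def)
  qed
  show False
  proof (rule final3[OF ab0(1,2), of X Y])
    fix a b assume ab: "a < 3" "b < 3" "a \<noteq> a0" "b \<noteq> b0"
    note kk = key[OF ab]
    define i where "i = ix (a0,b)"
    define j where "j = ix (a,b0)"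
    have ij: "i < 5" "j < 5" "i \<noteq> j" using kk by (simp_all add: i_def j_def)
    have pe: "pth P i j = [(a0,b), X a b, Y a b, (a,b0)]" using kk by (simp add: i_def j_def)
    have e: "{(a0,b), X a b} \<in> edges (KK 3 3)" "{X a b, Y a b} \<in> edges (KK 3 3)" "{Y a b, (a,b0)} \<in> edges (KK 3 3)"
      using pth_basic(5)[OF ij, of 0] pth_basic(5)[OF ij, of 1] pth_basic(5)[OF ij, of 2] pe
      by (simp_all add: numeral_2_eq_2)
    have nv: "X a b \<in> V" "X a b \<notin> T" "Y a b \<in> V" "Y a b \<notin> T" using kk by simp_all
    show "fst (X a b) < 3 \<and> snd (X a b) < 3 \<and> fst (Y a b) < 3 \<and> snd (Y a b) < 3 \<and>
      fst (X a b) \<noteq> a0 \<and> snd (X a b) \<noteq> b0 \<and> fst (Y a b) \<noteq> a0 \<and> snd (Y a b) \<noteq> b0 \<and>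
      radj (a0,b) (X a b) \<and> radj (X a b) (Y a b) \<and> radj (Y a b) (a,b0)"
      using e nv inT[of "X a b"] inT[of "Y a b"] by (auto simp: edge_KK V_def verts_KK)
  next
    fix a b a' b' assume ab: "a < 3" "b < 3" "a \<noteq> a0" "b \<noteq> b0" "a' < 3" "b' < 3" "a' \<noteq> a0" "b' \<noteq> b0"
      "(a,b) \<noteq> (a',b')"
    note kk = key[OF ab(1-4)] and kk' = key[OF ab(5-8)]
    define i where "i = ix (a0,b)"
    define j where "j = ix (a,b0)"
    define i' where "i' = ix (a0,b')"
    define j' where "j' = ix (a',b0)"
    have ij: "i < 5" "j < 5" "i \<noteq> j" "i' < 5" "j' < 5" "i' \<noteq> j'"
      using kk kk' by (simp_all add: i_def j_def i'_def j'_def)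
    have pij: "\<pi> i = (a0,b)" "\<pi> j = (a,b0)" "\<pi> i' = (a0,b')" "\<pi> j' = (a',b0)"
      using kk kk' by (simp_all add: i_def j_def i'_def j'_def)
    have "{i,j} \<noteq> {i',j'}"
    proof
      assume "{i,j} = {i',j'}"
      then have "{\<pi> i, \<pi> j} = {\<pi> i', \<pi> j'}" by (metis image_empty image_insert)
      then have "{(a0,b),(a,b0)} = {(a0,b'),(a',b0)}" using pij by simp
      then show False using ab by (auto simp: doubleton_eq_iff)
    qed
    then have "path_edges (pth P i j) \<inter> path_edges (pth P i' j') = {}" using pth_disj ij by blast
    moreover have "pth P i j = [(a0,b), X a b, Y a b, (a,b0)]" "pth P i' j' = [(a0,b'), X a' b', Y a' b', (a',b0)]"
      using kk kk' by (simp_all add: i_def j_def i'_def j'_def)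
    ultimately show "{{(a0,b), X a b}, {X a b, Y a b}, {Y a b, (a,b0)}} \<inter>
       {{(a0,b'), X a' b'}, {X a' b', Y a' b'}, {Y a' b', (a',b0)}} = {}"
      by (simp add: path_edges_4)
  qed
qed


lemma K23_3: "has_toi (KK 2 3) 3"
proof -
  define \<pi> where "\<pi> i = ((0::nat), (i::nat))" for i
  define P where "P i j = [\<pi> i, \<pi> j]" for i j :: nat
  have "totally_odd_strong_immersion (KK 2 3) 3 \<pi> P"
    unfolding totally_odd_strong_immersion_def
  proof (intro conjI allI impI)
    show "inj_on \<pi> {..<3}" by (auto simp: inj_on_def \<pi>_def)
    show "\<pi> ` {..<3} \<subseteq> verts (KK 2 3)" by (auto simp: \<pi>_def verts_KK)
    fix i j :: nat assume ij: "i < j \<and> j < 3"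
    show "is_path (KK 2 3) (P i j) (\<pi> i) (\<pi> j)" using ij by (auto simp: P_def \<pi>_def is_path_2 verts_KK edge_KK radj_def)
    show "odd (length (P i j) - 1)" by (simp add: P_def)
    fix l :: nat assume "l < 3"
    show "\<pi> l \<notin> path_interior (P i j)" by (simp add: P_def interior_2)
  next
    fix i j i' j' :: nat assume a: "i < j \<and> j < 3 \<and> i' < j' \<and> j' < 3 \<and> (i, j) \<noteq> (i', j')"
    then show "path_edges (P i j) \<inter> path_edges (P i' j') = {}"
      by (auto simp: P_def \<pi>_def path_edges_2 doubleton_eq_iff)
  qed
  then show ?thesis by (auto simp: has_toi_def)
qed

lemma K33_4: "has_toi (KK 3 3) 4"
proof -
  define \<pi> where "\<pi> i = [((0::nat),(0::nat)),(0,1),(0,2),(1,0)] ! i" for i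
  define P where "P i j = (if (i,j) = (1,3) then [(0,1),(2,1),(2,0),(1,0)]
     else if (i,j) = (2,3) then [(0,2),(1,2),(1,1),(1,0)] else [\<pi> i, \<pi> j])" for i j :: nat
  have pairs: "i < j \<and> j < 4 \<longleftrightarrow> (i,j) \<in> {(0,1),(0,2),(0,3),(1,2),(1,3),(2,3)}" for i j :: nat
    by (auto simp: lt4)
  have "totally_odd_strong_immersion (KK 3 3) 4 \<pi> P"
    unfolding totally_odd_strong_immersion_def
  proof (intro conjI allI impI)
    show "inj_on \<pi> {..<4}" unfolding inj_on_def by (auto simp: \<pi>_def lt4)
    show "\<pi> ` {..<4} \<subseteq> verts (KK 3 3)" by (auto simp: \<pi>_def verts_KK lt4)
    fix i j :: nat assume ij: "i < j \<and> j < 4"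
    then have c: "(i,j) \<in> {(0,1),(0,2),(0,3),(1,2),(1,3),(2,3)}" using pairs by blast
    then show "is_path (KK 3 3) (P i j) (\<pi> i) (\<pi> j)" "odd (length (P i j) - 1)"
      by (auto simp: P_def \<pi>_def is_path_2 is_path_4 verts_KK edge_KK radj_def)
    fix l :: nat assume "l < 4"
    then show "\<pi> l \<notin> path_interior (P i j)"
      using c by (auto simp: P_def \<pi>_def interior_2 interior_4 lt4)
  next
    fix i j i' j' :: nat assume a: "i < j \<and> j < 4 \<and> i' < j' \<and> j' < 4 \<and> (i, j) \<noteq> (i', j')"
    then have "(i,j) \<in> {(0,1),(0,2),(0,3),(1,2),(1,3),(2,3)}" "(i',j') \<in> {(0,1),(0,2),(0,3),(1,2),(1,3),(2,3)}"
      using pairs by blast+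
    then show "path_edges (P i j) \<inter> path_edges (P i' j') = {}"
      using a by (auto simp: P_def \<pi>_def path_edges_2 path_edges_4 doubleton_eq_iff)
  qed
  then show ?thesis by (auto simp: has_toi_def)
qed

theorem mainTheorem8:
  fixes t s :: nat
  shows "(2 \<le> t \<and> 2 \<le> s \<and> max s t \<ge> 4 \<longrightarrow>
            toi (cart_prod (complete_graph t) (complete_graph s)) = t + s - 1) \<and>
         (s = 3 \<and> t = 3 \<longrightarrow> toi (cart_prod (complete_graph t) (complete_graph s)) = 4) \<and>
         (s = 3 \<and> t = 2 \<longrightarrow> toi (cart_prod (complete_graph t) (complete_graph s)) = 3)"
proof (intro conjI impI)
  assume a: "2 \<le> t \<and> 2 \<le> s \<and> max s t \<ge> 4"
  have "has_toi (KK t s) (t + s - 1)"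
  proof (cases "4 \<le> s")
    case True then show ?thesis using has_toi_cons[of t s] a by simp
  next
    case False
    then have "4 \<le> t" using a by (auto simp: max_def split: if_splits)
    then have "has_toi (KK s t) (s + t - 1)" using has_toi_cons[of s t] a by simp
    then show ?thesis using has_toi_swap by (simp add: add.commute)
  qed
  then show "toi (KK t s) = t + s - 1" using upper_KK by (intro toi_eq) auto
next
  assume a: "s = 3 \<and> t = 3"
  have "k \<le> 4" if "has_toi (KK 3 3) k" for k
    using upper_KK[OF that] K33_no5 that by (cases "k = 5") auto
  then show "toi (KK t s) = 4" using a K33_4 by (intro toi_eq) auto
next
  assume a: "s = 3 \<and> t = 2"
  have "k \<le> 3" if "has_toi (KK 2 3) k" for k
    using upper_KK[OF that] prism_no4 that by (cases "k = 4") auto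
  then show "toi (KK t s) = 3" using a K23_3 by (intro toi_eq) auto
qed


end
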